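(* Let $0\le k\le n$. The number $F(k,n)$ of preference profiles for $n$ men and $n$ women having exactly $k$ pairs of soulmates is \[F(k,n)=\binom{n}{k}^2 k!\,(n-1)!^{2k}\left(\sum_{i=0}^{n-k} (-1)^{i}\binom{n-k}{i}^2 (n-1)!^{2i}\, i!\, n!^{2n-2k-2i}\right).\]
   Context: A preference profile for $n$ (labeled) men and $n$ (labeled) women consists of, for each man, a strict ranking of the women (bijection to $\{1,\dots,n\}$, 1 = favorite), and for each woman, a strict ranking of the men. A man and a woman are soulmates if each ranks the other first; the number of pairs of soulmates of a profile is the number of such man–woman pairs. *)

theory Defs
  imports Main "HOL-Library.FuncSet"
begin

text \<open>Men and women are both labelled by {0..<n}. A ranking of the other side by one
person is a bijection from {0..<n} onto {1..n} (1 = favourite), represented as an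
extensional function.\<close>

definition rankings :: "nat \<Rightarrow> (nat \<Rightarrow> nat) set" where
  "rankings n = {r \<in> {0..<n} \<rightarrow>\<^sub>E {1..n}. bij_betw r {0..<n} {1..n}}"

text \<open>A preference profile: (men's rankings of women, women's rankings of men).\<close>
definition profiles :: "nat \<Rightarrow> ((nat \<Rightarrow> nat \<Rightarrow> nat) \<times> (nat \<Rightarrow> nat \<Rightarrow> nat)) set" where
  "profiles n = ({0..<n} \<rightarrow>\<^sub>E rankings n) \<times> ({0..<n} \<rightarrow>\<^sub>E rankings n)"

definition soulmate_pairs :: "nat \<Rightarrow> (nat \<Rightarrow> nat \<Rightarrow> nat) \<times> (nat \<Rightarrow> nat \<Rightarrow> nat) \<Rightarrow> nat" where
  "soulmate_pairs n P = card {(m, w). m < n \<and> w < n \<and> fst P m w = 1 \<and> snd P w m = 1}"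

definition F :: "nat \<Rightarrow> nat \<Rightarrow> nat" where
  "F k n = card {P \<in> profiles n. soulmate_pairs n P = k}"

end

theory Submission
  imports Defs
begin


lemma card_inj_funcset:
  assumes "finite S" "finite T" "card S \<le> card T"
  shows "card {f \<in> S \<rightarrow>\<^sub>E T. inj_on f S} * fact (card T - card S) = fact (card T)"
  using assms
proof (induct S arbitrary: T rule: finite_induct)
  case empty
  then show ?case by (simp add: Collect_conv_if PiE_empty_domain)
next
  case (insert x S)
  have fin: "finite {f \<in> S \<rightarrow>\<^sub>E (T - {y}). inj_on f S}" for y
    using insert(1) insert(4) by (auto intro: finite_subset[OF _ finite_PiE])
  have IH: "card {f \<in> S \<rightarrow>\<^sub>E (T - {y}). inj_on f S} * fact (card T - 1 - card S) = fact (card T - 1)"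
    if "y \<in> T" for y
    using insert(3)[of "T - {y}"] insert that by auto
  have "card {f \<in> insert x S \<rightarrow>\<^sub>E T. inj_on f (insert x S)} =
      card ((\<lambda>(y, g). g(x := y)) ` {(y, g). y \<in> T \<and> g \<in> S \<rightarrow>\<^sub>E (T - {y}) \<and> inj_on g S})"
    using extensional_funcset_extend_domain_inj_on_eq[OF \<open>x \<notin> S\<close>, of T] by simp
  also have "\<dots> = card {(y, g). y \<in> T \<and> g \<in> S \<rightarrow>\<^sub>E (T - {y}) \<and> inj_on g S}"
    by (rule card_image[OF extensional_funcset_extend_domain_inj_onI[OF \<open>x \<notin> S\<close>]])
  also have "{(y, g). y \<in> T \<and> g \<in> S \<rightarrow>\<^sub>E (T - {y}) \<and> inj_on g S} =
      Sigma T (\<lambda>y. {f \<in> S \<rightarrow>\<^sub>E (T - {y}). inj_on f S})" by auto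
  also have "card \<dots> = (\<Sum>y\<in>T. card {f \<in> S \<rightarrow>\<^sub>E (T - {y}). inj_on f S})"
    using insert(4) fin by simp
  finally have e: "card {f \<in> insert x S \<rightarrow>\<^sub>E T. inj_on f (insert x S)} =
     (\<Sum>y\<in>T. card {f \<in> S \<rightarrow>\<^sub>E (T - {y}). inj_on f S})" .
  have "card {f \<in> insert x S \<rightarrow>\<^sub>E T. inj_on f (insert x S)} * fact (card T - card (insert x S))
     = (\<Sum>y\<in>T. card {f \<in> S \<rightarrow>\<^sub>E (T - {y}). inj_on f S} * fact (card T - 1 - card S))"
    unfolding e using insert by (simp add: sum_distrib_right)
  also have "\<dots> = (\<Sum>y\<in>T. fact (card T - 1))" using IH by simp
  also have "\<dots> = fact (card T)"
    using insert by (cases "card T") auto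
  finally show ?case .
qed

lemma card_inj_fix:
  assumes "a \<in> S" "b \<in> T"
  shows "card {f \<in> S \<rightarrow>\<^sub>E T. inj_on f S \<and> f a = b} =
         card {g \<in> (S - {a}) \<rightarrow>\<^sub>E (T - {b}). inj_on g (S - {a})}"
proof -
  let ?G = "{g \<in> (S - {a}) \<rightarrow>\<^sub>E (T - {b}). inj_on g (S - {a})}"
  have inj: "inj_on (\<lambda>g. g(a:=b)) ?G"
  proof (rule inj_onI)
    fix g g' assume g: "g \<in> ?G" and g': "g' \<in> ?G" and eq: "g(a:=b) = g'(a:=b)"
    have "g a = g' a" using g g' by (auto simp: PiE_def extensional_def)
    then show "g = g'" using eq by (metis fun_upd_triv fun_upd_upd)
  qed
  have img: "{f \<in> S \<rightarrow>\<^sub>E T. inj_on f S \<and> f a = b} = (\<lambda>g. g(a:=b)) ` ?G"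
  proof (intro equalityI subsetI)
    fix f assume f: "f \<in> {f \<in> S \<rightarrow>\<^sub>E T. inj_on f S \<and> f a = b}"
    let ?g = "f(a:=undefined)"
    have "?g \<in> ?G"
    proof -
      have "?g \<in> (S - {a}) \<rightarrow>\<^sub>E (T - {b})"
        using f assms by (auto simp: PiE_def extensional_def Pi_def inj_on_def) 
      moreover have "inj_on ?g (S - {a})" using f by (auto simp: inj_on_def)
      ultimately show ?thesis by simp
    qed
    moreover have "f = ?g(a:=b)" using f by auto
    ultimately show "f \<in> (\<lambda>g. g(a:=b)) ` ?G" by blast
  next
    fix f assume "f \<in> (\<lambda>g. g(a:=b)) ` ?G"
    then obtain g where g: "g \<in> ?G" and fg: "f = g(a:=b)" by blast
    have "f \<in> S \<rightarrow>\<^sub>E T" using g assms unfolding fg by (auto simp: PiE_def extensional_def Pi_def)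
    moreover have "inj_on f S"
    proof -
      have "inj_on g (S - {a})" using g by simp
      moreover have "b \<notin> g ` (S - {a})" using g by auto
      ultimately have "inj_on (g(a:=b)) (insert a (S - {a}))"
        by (subst inj_on_insert) (auto simp: inj_on_def image_iff)
      moreover have "insert a (S - {a}) = S" using assms by blast
      ultimately show ?thesis unfolding fg by simp
    qed
    moreover have "f a = b" using fg by simp
    ultimately show "f \<in> {f \<in> S \<rightarrow>\<^sub>E T. inj_on f S \<and> f a = b}" by blast
  qed
  show ?thesis unfolding img by (rule card_image[OF inj])
qed

lemma rankings_iff:
  "r \<in> rankings n \<longleftrightarrow> r \<in> {0..<n} \<rightarrow>\<^sub>E {1..n} \<and> inj_on r {0..<n}"
proof
  assume "r \<in> rankings n" then show "r \<in> {0..<n} \<rightarrow>\<^sub>E {1..n} \<and> inj_on r {0..<n}"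
    by (auto simp: rankings_def bij_betw_def)
next
  assume h: "r \<in> {0..<n} \<rightarrow>\<^sub>E {1..n} \<and> inj_on r {0..<n}"
  then have sub: "r ` {0..<n} \<subseteq> {1..n}" by auto
  have "card (r ` {0..<n}) = card {1..n}" using h by (simp add: card_image)
  then have "r ` {0..<n} = {1..n}" using sub by (simp add: card_subset_eq)
  then show "r \<in> rankings n" using h by (auto simp: rankings_def bij_betw_def)
qed

lemma rankings_eq: "rankings n = {r \<in> {0..<n} \<rightarrow>\<^sub>E {1..n}. inj_on r {0..<n}}"
  using rankings_iff by blast

lemma card_rankings: "card (rankings n) = fact n"
  using card_inj_funcset[of "{0..<n}" "{1..n}"] by (simp add: rankings_eq)

lemma finite_rankings: "finite (rankings n)"
  unfolding rankings_eq by (rule finite_subset[OF _ finite_PiE[of "{0..<n}" "\<lambda>_. {1..n}"]]) auto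

lemma card_rankings_fix: assumes "w < n"
  shows "card {r \<in> rankings n. r w = 1} = fact (n - 1)"
proof -
  have "{r \<in> rankings n. r w = 1} = {f \<in> {0..<n} \<rightarrow>\<^sub>E {1..n}. inj_on f {0..<n} \<and> f w = 1}"
    by (auto simp: rankings_eq)
  also have "card \<dots> = card {g \<in> ({0..<n} - {w}) \<rightarrow>\<^sub>E ({1..n} - {1}). inj_on g ({0..<n} - {w})}"
    using assms by (intro card_inj_fix) auto
  also have "\<dots> = fact (n - 1)"
    using card_inj_funcset[of "{0..<n} - {w}" "{1..n} - {1}"] assms by simp
  finally show ?thesis .
qed



definition cond :: "(nat \<Rightarrow> nat \<Rightarrow> nat) \<times> (nat \<Rightarrow> nat \<Rightarrow> nat) \<Rightarrow> nat set \<Rightarrow> (nat \<Rightarrow> nat) \<Rightarrow> bool" where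
  "cond P A f = (\<forall>a\<in>A. fst P a (f a) = 1 \<and> snd P (f a) a = 1)"

definition Inj :: "nat \<Rightarrow> nat \<Rightarrow> (nat set \<times> (nat \<Rightarrow> nat)) set" where
  "Inj n j = {(A, f). A \<subseteq> {0..<n} \<and> card A = j \<and> f \<in> A \<rightarrow>\<^sub>E {0..<n} \<and> inj_on f A}"

lemma prod_if_const:
  assumes "finite S" "B \<subseteq> S"
  shows "(\<Prod>x\<in>S. if x \<in> B then c else d) = c ^ card B * d ^ (card S - card B)"
proof -
  have "(\<Prod>x\<in>S. if x \<in> B then c else d) = (\<Prod>x\<in>S \<inter> {x. x \<in> B}. c) * (\<Prod>x\<in>S \<inter> - {x. x \<in> B}. d)"
    using assms(1) by (rule prod.If_cases)
  also have "S \<inter> {x. x \<in> B} = B" using assms by auto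
  also have "S \<inter> - {x. x \<in> B} = S - B" by auto
  finally show ?thesis using assms by (simp add: card_Diff_subset finite_subset)
qed

lemma rank_inj: "r \<in> rankings n \<Longrightarrow> x < n \<Longrightarrow> y < n \<Longrightarrow> r x = r y \<Longrightarrow> x = y"
  unfolding rankings_iff inj_on_def by auto

lemma count_profiles:
  assumes "(A, f) \<in> Inj n j"
  shows "card {P \<in> profiles n. cond P A f} = fact (n - 1) ^ (2 * j) * fact n ^ (2 * (n - j))"
proof -
  have A: "A \<subseteq> {0..<n}" "card A = j" "f \<in> A \<rightarrow>\<^sub>E {0..<n}" "inj_on f A"
    using assms by (auto simp: Inj_def)
  define BM where "BM m = {r \<in> rankings n. m \<in> A \<longrightarrow> r (f m) = 1}" for m
  define BW where "BW w = {r \<in> rankings n. \<forall>a\<in>A. f a = w \<longrightarrow> r a = 1}" for w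
  have eq: "{P \<in> profiles n. cond P A f} = PiE {0..<n} BM \<times> PiE {0..<n} BW"
  proof (intro equalityI subsetI)
    fix P assume P: "P \<in> {P \<in> profiles n. cond P A f}"
    obtain M W where PMW: "P = (M, W)" by fastforce
    have M: "M \<in> {0..<n} \<rightarrow>\<^sub>E rankings n" and W: "W \<in> {0..<n} \<rightarrow>\<^sub>E rankings n"
      using P by (auto simp: profiles_def PMW)
    have c: "\<And>a. a \<in> A \<Longrightarrow> M a (f a) = 1 \<and> W (f a) a = 1" using P by (auto simp: cond_def PMW)
    have "M \<in> PiE {0..<n} BM" using M c by (auto simp: BM_def PiE_iff)
    moreover have "W \<in> PiE {0..<n} BW" using W c by (auto simp: BW_def PiE_iff)
    ultimately show "P \<in> PiE {0..<n} BM \<times> PiE {0..<n} BW" by (simp add: PMW)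
  next
    fix P assume P: "P \<in> PiE {0..<n} BM \<times> PiE {0..<n} BW"
    obtain M W where PMW: "P = (M, W)" by fastforce
    have M: "M \<in> PiE {0..<n} BM" and W: "W \<in> PiE {0..<n} BW" using P PMW by auto
    have "P \<in> profiles n" using M W by (auto simp: profiles_def PMW PiE_iff BM_def BW_def)
    moreover have "cond P A f"
      unfolding cond_def PMW
    proof
      fix a assume a: "a \<in> A"
      have an: "a < n" "f a < n" using a A by auto
      have "M a \<in> BM a" using M an by auto
      then have "M a (f a) = 1" using a by (simp add: BM_def)
      moreover have "W (f a) \<in> BW (f a)" using W an by auto
      then have "W (f a) a = 1" using a by (simp add: BW_def)
      ultimately show "fst (M, W) a (f a) = 1 \<and> snd (M, W) (f a) a = 1" by simp
    qed
    ultimately show "P \<in> {P \<in> profiles n. cond P A f}" by simp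
  qed
  have cM: "card (BM m) = (if m \<in> A then fact (n - 1) else fact n)" if "m < n" for m
  proof (cases "m \<in> A")
    case True
    then have "BM m = {r \<in> rankings n. r (f m) = 1}" by (auto simp: BM_def)
    moreover have "f m < n" using True A by auto
    ultimately show ?thesis using True card_rankings_fix[of "f m" n] by simp
  next
    case False
    then show ?thesis by (simp add: BM_def card_rankings)
  qed
  have cW: "card (BW w) = (if w \<in> f ` A then fact (n - 1) else fact n)" if "w < n" for w
  proof (cases "w \<in> f ` A")
    case True
    then obtain a where a: "a \<in> A" "w = f a" by blast
    have "BW w = {r \<in> rankings n. r a = 1}"
      using a A(4) by (auto simp: BW_def inj_on_def)
    moreover have "a < n" using a A by auto
    ultimately show ?thesis using True card_rankings_fix[of a n] by simp
  next
    case False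
    then have "BW w = rankings n" by (auto simp: BW_def)
    then show ?thesis using False by (simp add: card_rankings)
  qed
  have fA: "f ` A \<subseteq> {0..<n}" "card (f ` A) = j" using A by (auto simp: card_image)
  have "card {P \<in> profiles n. cond P A f} = (\<Prod>m\<in>{0..<n}. card (BM m)) * (\<Prod>w\<in>{0..<n}. card (BW w))"
    unfolding eq card_cartesian_product by (simp add: card_PiE)
  also have "(\<Prod>m\<in>{0..<n}. card (BM m)) = (\<Prod>m\<in>{0..<n}. if m \<in> A then fact (n - 1) else fact n)"
    using cM by (intro prod.cong) auto
  also have "\<dots> = fact (n - 1) ^ j * fact n ^ (n - j)"
    using prod_if_const[of "{0..<n}" A "fact (n - 1)" "fact n"] A by simp
  also have "(\<Prod>w\<in>{0..<n}. card (BW w)) = (\<Prod>w\<in>{0..<n}. if w \<in> f ` A then fact (n - 1) else fact n)"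
    using cW by (intro prod.cong) auto
  also have "\<dots> = fact (n - 1) ^ j * fact n ^ (n - j)"
    using prod_if_const[of "{0..<n}" "f ` A" "fact (n - 1)" "fact n"] fA by simp
  also have "(fact (n - 1) ^ j * fact n ^ (n - j)) * (fact (n - 1) ^ j * fact n ^ (n - j)) =
     (fact (n - 1) ^ (2 * j) * fact n ^ (2 * (n - j)) :: nat)"
    by (simp only: mult_2 power_add) (simp add: mult_ac)
  finally show ?thesis .
qed

lemma count_pairs:
  assumes P: "P \<in> profiles n"
  shows "card {x \<in> Inj n j. cond P (fst x) (snd x)} = soulmate_pairs n P choose j"
    and "soulmate_pairs n P \<le> n"
proof -
  obtain M W where PMW: "P = (M, W)" by fastforce
  have M: "\<And>m. m < n \<Longrightarrow> M m \<in> rankings n" and W: "\<And>w. w < n \<Longrightarrow> W w \<in> rankings n"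
    using P by (auto simp: profiles_def PMW PiE_iff)
  define D where "D = {m. m < n \<and> (\<exists>w<n. M m w = 1 \<and> W w m = 1)}"
  define S where "S = {(m, w). m < n \<and> w < n \<and> M m w = 1 \<and> W w m = 1}"
  have uniqM: "w = w'" if "m < n" "w < n" "w' < n" "M m w = 1" "M m w' = 1" for m w w'
    using rank_inj[OF M[OF that(1)]] that by auto
  have uniqW: "m = m'" if "w < n" "m < n" "m' < n" "W w m = 1" "W w m' = 1" for m m' w
    using rank_inj[OF W[OF that(1)]] that by auto
  have DS: "D = fst ` S" by (auto simp: D_def S_def image_iff) blast
  have injS: "inj_on fst S" by (auto simp: inj_on_def S_def intro: uniqM)
  have finS: "finite S" by (rule finite_subset[of _ "{0..<n} \<times> {0..<n}"]) (auto simp: S_def)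
  have cardD: "card D = soulmate_pairs n P"
    unfolding DS soulmate_pairs_def PMW using injS by (simp add: card_image S_def)
  have finD: "finite D" by (simp add: D_def)
  show "soulmate_pairs n P \<le> n"
    unfolding cardD[symmetric] by (rule order.trans[OF card_mono[of "{0..<n}"]]) (auto simp: D_def)
  define pt where "pt m = (SOME w. w < n \<and> M m w = 1 \<and> W w m = 1)" for m
  have pt: "pt m < n \<and> M m (pt m) = 1 \<and> W (pt m) m = 1" if "m \<in> D" for m
    unfolding pt_def by (rule someI_ex) (use that in \<open>auto simp: D_def\<close>)
  let ?X = "{x \<in> Inj n j. cond P (fst x) (snd x)}"
  have "bij_betw fst ?X {A. A \<subseteq> D \<and> card A = j}"
  proof (rule bij_betw_imageI)
    show "inj_on fst ?X"
    proof (rule inj_onI)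
      fix x y assume x: "x \<in> ?X" and y: "y \<in> ?X" and e: "fst x = fst y"
      obtain A f where xA: "x = (A, f)" by fastforce
      obtain g where yA: "y = (A, g)" using e xA by (cases y) auto
      have fg: "f \<in> A \<rightarrow>\<^sub>E {0..<n}" "g \<in> A \<rightarrow>\<^sub>E {0..<n}" "A \<subseteq> {0..<n}"
        using x y by (auto simp: xA yA Inj_def)
      have "f a = g a" if "a \<in> A" for a
      proof -
        have h: "a < n" "f a < n" "g a < n" using that fg by auto
        show ?thesis using uniqM[OF h] x y that by (auto simp: xA yA cond_def PMW)
      qed
      then have "f = g" using fg by (intro PiE_ext[of f A "\<lambda>_. {0..<n}"]) auto
      then show "x = y" by (simp add: xA yA)
    qed
  next
    show "fst ` ?X = {A. A \<subseteq> D \<and> card A = j}"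
    proof (intro equalityI subsetI)
      fix A assume "A \<in> fst ` ?X"
      then obtain f where Af: "(A, f) \<in> ?X" by force
      then show "A \<in> {A. A \<subseteq> D \<and> card A = j}"
        by (auto simp: Inj_def cond_def PMW D_def PiE_iff)
    next
      fix A assume A: "A \<in> {A. A \<subseteq> D \<and> card A = j}"
      have AD: "A \<subseteq> D" using A by simp
      have Dn: "D \<subseteq> {0..<n}" by (auto simp: D_def)
      let ?f = "restrict pt A"
      have "?f \<in> A \<rightarrow>\<^sub>E {0..<n}" using pt AD by auto
      moreover have "inj_on ?f A"
      proof (rule inj_onI)
        fix a a' assume a: "a \<in> A" "a' \<in> A" "?f a = ?f a'"
        then have "pt a = pt a'" by simp
        moreover have aD: "a \<in> D" "a' \<in> D" using a AD by auto
        moreover have "a < n" "a' < n" using aD Dn by auto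
        ultimately show "a = a'" using pt[OF aD(1)] pt[OF aD(2)] uniqW[of "pt a" a a'] by simp
      qed
      moreover have "cond P A ?f" using pt AD by (auto simp: cond_def PMW)
      ultimately have "(A, ?f) \<in> ?X" using A AD Dn by (auto simp: Inj_def)
      then show "A \<in> fst ` ?X" by force
    qed
  qed
  then have "card ?X = card {A. A \<subseteq> D \<and> card A = j}" by (rule bij_betw_same_card)
  also have "\<dots> = card D choose j" using finD by (rule n_subsets)
  finally show "card ?X = soulmate_pairs n P choose j" using cardD by simp
qed

lemma finite_Inj: "finite (Inj n j)"
proof -
  have "Inj n j \<subseteq> Sigma (Pow {0..<n}) (\<lambda>A. A \<rightarrow>\<^sub>E {0..<n})" by (auto simp: Inj_def)
  moreover have "finite (Sigma (Pow {0..<n}) (\<lambda>A. A \<rightarrow>\<^sub>E {0..<n}))"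
    by (intro finite_SigmaI finite_PiE) (auto intro: finite_subset)
  ultimately show ?thesis by (rule finite_subset)
qed

lemma card_Inj: assumes "j \<le> n" shows "card (Inj n j) = (n choose j)^2 * fact j"
proof -
  have eq: "Inj n j = Sigma {A. A \<subseteq> {0..<n} \<and> card A = j} (\<lambda>A. {f \<in> A \<rightarrow>\<^sub>E {0..<n}. inj_on f A})"
    by (auto simp: Inj_def)
  have ci: "card {f \<in> A \<rightarrow>\<^sub>E {0..<n}. inj_on f A} = (n choose j) * fact j"
    if A: "A \<subseteq> {0..<n}" "card A = j" for A
  proof -
    have fA: "finite A" using A finite_subset by blast
    have "card {f \<in> A \<rightarrow>\<^sub>E {0..<n}. inj_on f A} * fact (n - j) = fact n"
      using card_inj_funcset[of A "{0..<n}"] fA A assms by simp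
    moreover have "fact j * fact (n - j) * (n choose j) = (fact n :: nat)"
      using assms by (rule binomial_fact_lemma)
    ultimately have "card {f \<in> A \<rightarrow>\<^sub>E {0..<n}. inj_on f A} * fact (n - j) = ((n choose j) * fact j) * fact (n - j)"
      by (simp add: ac_simps)
    then show ?thesis by simp
  qed
  have fin: "finite {A. A \<subseteq> {0..<n} \<and> card A = j}" by simp
  have "card (Inj n j) = (\<Sum>A\<in>{A. A \<subseteq> {0..<n} \<and> card A = j}. card {f \<in> A \<rightarrow>\<^sub>E {0..<n}. inj_on f A})"
    unfolding eq by (rule card_SigmaI[OF fin]) (auto intro: finite_subset[OF _ finite_PiE[of _ "\<lambda>_. {0..<n}"]] finite_subset)
  also have "\<dots> = (\<Sum>A\<in>{A. A \<subseteq> {0..<n} \<and> card A = j}. (n choose j) * fact j)"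
    using ci by (intro sum.cong) auto
  also have "\<dots> = card {A. A \<subseteq> {0..<n} \<and> card A = j} * ((n choose j) * fact j)" by simp
  also have "card {A. A \<subseteq> {0..<n} \<and> card A = j} = n choose j" using n_subsets[of "{0..<n}" j] by simp
  finally show ?thesis by (simp add: power2_eq_square)
qed

lemma finite_profiles: "finite (profiles n)"
  by (simp add: profiles_def finite_PiE finite_rankings)

lemma moment:
  assumes "j \<le> n"
  shows "(\<Sum>P\<in>profiles n. soulmate_pairs n P choose j) =
     (n choose j)^2 * fact j * (fact (n - 1) ^ (2 * j) * fact n ^ (2 * (n - j)))"
proof -
  have "(\<Sum>P\<in>profiles n. soulmate_pairs n P choose j) =
        (\<Sum>P\<in>profiles n. \<Sum>x\<in>Inj n j. if cond P (fst x) (snd x) then 1 else 0)"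
  proof (intro sum.cong refl)
    fix P assume "P \<in> profiles n"
    then have "soulmate_pairs n P choose j = card {x \<in> Inj n j. cond P (fst x) (snd x)}"
      by (simp add: count_pairs(1))
    also have "\<dots> = (\<Sum>x\<in>{x \<in> Inj n j. cond P (fst x) (snd x)}. 1)" by simp
    also have "\<dots> = (\<Sum>x\<in>Inj n j. if cond P (fst x) (snd x) then 1 else 0)"
      using finite_Inj by (rule sum.inter_filter)
    finally show "soulmate_pairs n P choose j = (\<Sum>x\<in>Inj n j. if cond P (fst x) (snd x) then 1 else 0)" .
  qed
  also have "\<dots> = (\<Sum>x\<in>Inj n j. \<Sum>P\<in>profiles n. if cond P (fst x) (snd x) then 1 else 0)"
    by (rule sum.swap)
  also have "\<dots> = (\<Sum>x\<in>Inj n j. card {P \<in> profiles n. cond P (fst x) (snd x)})"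
  proof (intro sum.cong refl)
    fix x
    have "(\<Sum>P\<in>profiles n. if cond P (fst x) (snd x) then 1 else 0) = (\<Sum>P\<in>{P \<in> profiles n. cond P (fst x) (snd x)}. 1::nat)"
      using finite_profiles by (rule sum.inter_filter[symmetric])
    then show "(\<Sum>P\<in>profiles n. if cond P (fst x) (snd x) then 1 else 0) = card {P \<in> profiles n. cond P (fst x) (snd x)}"
      by simp
  qed
  also have "\<dots> = (\<Sum>x\<in>Inj n j. fact (n - 1) ^ (2 * j) * fact n ^ (2 * (n - j)))"
    by (intro sum.cong refl) (use count_profiles in force)
  also have "\<dots> = card (Inj n j) * (fact (n - 1) ^ (2 * j) * fact n ^ (2 * (n - j)))" by simp
  finally show ?thesis using card_Inj[OF assms] by simp
qed



lemma alt_sum_shift: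
  fixes s k N :: nat
  assumes "k \<le> s" "s \<le> N"
  shows "(\<Sum>i=0..N-k. (-1)^i * int (s - k choose i)) = (if s = k then 1 else 0)"
proof -
  have "(\<Sum>i=0..N-k. (-1)^i * int (s - k choose i)) = (\<Sum>i\<in>{..s-k}. (-1)^i * int (s - k choose i))"
    by (rule sum.mono_neutral_right) (use assms in auto)
  also have "\<dots> = (if s = k then 1 else 0)"
  proof (cases "s = k")
    case True then show ?thesis by simp
  next
    case False
    then have "s - k > 0" using assms by simp
    from choose_alternating_sum[OF this, where 'a=int] False show ?thesis by simp
  qed
  finally show ?thesis .
qed

lemma choose_mult_gen:
  assumes "k \<le> j"
  shows "(s choose j) * (j choose k) = (s choose k) * ((s - k) choose (j - k))"
proof (cases "j \<le> s")
  case True then show ?thesis using choose_mult[OF assms True] by simp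
next
  case False
  then show ?thesis using assms by (cases "k \<le> s") (auto simp: binomial_eq_0)
qed

lemma inner_sum:
  fixes s k N :: nat
  assumes "k \<le> N" "s \<le> N"
  shows "(\<Sum>i=0..N-k. (-1)^i * int (k + i choose k) * int (s choose (k + i))) = (if s = k then 1 else 0)"
proof -
  have "(\<Sum>i=0..N-k. (-1)^i * int (k + i choose k) * int (s choose (k + i))) =
        (\<Sum>i=0..N-k. int (s choose k) * ((-1)^i * int (s - k choose i)))"
  proof (intro sum.cong refl)
    fix i
    have "(s choose (k + i)) * ((k + i) choose k) = (s choose k) * ((s - k) choose i)"
      using choose_mult_gen[of k "k + i" s] by simp
    then have "int (s choose (k + i)) * int ((k + i) choose k) = int (s choose k) * int ((s - k) choose i)"
      by (metis of_nat_mult)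
    then show "(-1)^i * int (k + i choose k) * int (s choose (k + i)) = int (s choose k) * ((-1)^i * int (s - k choose i))"
      by (simp add: algebra_simps)
  qed
  also have "\<dots> = int (s choose k) * (\<Sum>i=0..N-k. (-1)^i * int (s - k choose i))"
    by (simp add: sum_distrib_left)
  also have "\<dots> = (if s = k then 1 else 0)"
  proof (cases "k \<le> s")
    case True then show ?thesis using alt_sum_shift[OF True assms(2)] by simp
  next
    case False then show ?thesis by simp
  qed
  finally show ?thesis .
qed

lemma inversion:
  fixes b :: "nat \<Rightarrow> int" and k N :: nat
  assumes "k \<le> N"
  shows "(\<Sum>i=0..N-k. (-1)^i * int (k + i choose k) * (\<Sum>s=0..N. int (s choose (k + i)) * b s)) = b k"
proof -
  have "(\<Sum>i=0..N-k. (-1)^i * int (k + i choose k) * (\<Sum>s=0..N. int (s choose (k + i)) * b s)) =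
      (\<Sum>i=0..N-k. \<Sum>s=0..N. b s * ((-1)^i * int (k + i choose k) * int (s choose (k + i))))"
    by (simp add: sum_distrib_left algebra_simps)
  also have "\<dots> = (\<Sum>s=0..N. \<Sum>i=0..N-k. b s * ((-1)^i * int (k + i choose k) * int (s choose (k + i))))"
    by (rule sum.swap)
  also have "\<dots> = (\<Sum>s=0..N. b s * (if s = k then 1 else 0))"
    by (intro sum.cong refl) (simp add: sum_distrib_left[symmetric] inner_sum assms)
  also have "\<dots> = b k" using assms by (simp add: if_distrib sum.delta cong: if_cong)
  finally show ?thesis .
qed

lemma group_sum:
  fixes g :: "nat \<Rightarrow> int"
  shows "(\<Sum>P\<in>profiles n. g (soulmate_pairs n P)) = (\<Sum>s=0..n. g s * int (card {P \<in> profiles n. soulmate_pairs n P = s}))"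
proof -
  have "(\<Sum>P\<in>profiles n. g (soulmate_pairs n P)) = (\<Sum>P\<in>profiles n. \<Sum>s=0..n. if soulmate_pairs n P = s then g s else 0)"
  proof (intro sum.cong refl)
    fix P assume "P \<in> profiles n"
    then have "soulmate_pairs n P \<in> {0..n}" using count_pairs(2) by simp
    then show "g (soulmate_pairs n P) = (\<Sum>s=0..n. if soulmate_pairs n P = s then g s else 0)"
      by (simp add: sum.delta)
  qed
  also have "\<dots> = (\<Sum>s=0..n. \<Sum>P\<in>profiles n. if soulmate_pairs n P = s then g s else 0)"
    by (rule sum.swap)
  also have "\<dots> = (\<Sum>s=0..n. g s * int (card {P \<in> profiles n. soulmate_pairs n P = s}))"
  proof (intro sum.cong refl)
    fix s
    have "(\<Sum>P\<in>profiles n. if soulmate_pairs n P = s then g s else 0) = (\<Sum>P\<in>{P \<in> profiles n. soulmate_pairs n P = s}. g s)"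
      using finite_profiles by (rule sum.inter_filter[symmetric])
    then show "(\<Sum>P\<in>profiles n. if soulmate_pairs n P = s then g s else 0) = g s * int (card {P \<in> profiles n. soulmate_pairs n P = s})"
      by simp
  qed
  finally show ?thesis .
qed

lemma term_identity:
  fixes X Y :: nat
  assumes "k + i \<le> n"
  shows "(k + i choose k) * ((n choose (k + i))^2 * fact (k + i) * (X ^ (2 * (k + i)) * Y ^ (2 * (n - (k + i)))))
       = ((n choose k)^2 * fact k * X^(2*k)) * ((n - k choose i)^2 * X^(2*i) * fact i * Y^(2*n - 2*k - 2*i))"
proof -
  have c: "(n choose (k + i)) * ((k + i) choose k) = (n choose k) * ((n - k) choose i)"
    using choose_mult[of k "k + i" n] assms by simp
  have f: "fact k * fact i * ((k + i) choose k) = (fact (k + i) :: nat)"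
    using binomial_fact_lemma[of k "k + i"] by simp
  have e: "2 * (n - (k + i)) = 2*n - 2*k - 2*i" "2 * (k + i) = 2*k + 2*i" by auto
  have "(k + i choose k) * ((n choose (k + i))^2 * fact (k + i) * (X ^ (2 * (k + i)) * Y ^ (2 * (n - (k + i)))))
     = ((n choose (k + i)) * ((k + i) choose k))^2 * (fact k * fact i) * (X^(2*k) * X^(2*i)) * Y^(2*n - 2*k - 2*i)"
    unfolding e f[symmetric] power_add by (simp add: power2_eq_square ac_simps)
  also have "\<dots> = ((n choose k) * ((n - k) choose i))^2 * (fact k * fact i) * (X^(2*k) * X^(2*i)) * Y^(2*n - 2*k - 2*i)"
    unfolding c ..
  finally show ?thesis by (simp add: power2_eq_square ac_simps)
qed

theorem mainTheorem3:
  fixes k n :: nat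
  assumes "k \<le> n"
  shows "int (F k n) =
    int ((n choose k)^2 * fact k * (fact (n - 1))^(2*k)) *
    (\<Sum>i = 0..n - k. (-1)^i * int ((n - k choose i)^2 * (fact (n - 1))^(2*i) * fact i
        * (fact n)^(2*n - 2*k - 2*i)))"
proof -
  define b where "b s = int (card {P \<in> profiles n. soulmate_pairs n P = s})" for s
  have mom: "(\<Sum>s=0..n. int (s choose j) * b s) =
      int ((n choose j)^2 * fact j * (fact (n - 1) ^ (2 * j) * fact n ^ (2 * (n - j))))" if "j \<le> n" for j
  proof -
    have "(\<Sum>s=0..n. int (s choose j) * b s) = (\<Sum>P\<in>profiles n. int (soulmate_pairs n P choose j))"
      using group_sum[of "\<lambda>s. int (s choose j)" n] by (simp add: b_def)
    also have "\<dots> = int (\<Sum>P\<in>profiles n. soulmate_pairs n P choose j)" by simp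
    also have "\<dots> = int ((n choose j)^2 * fact j * (fact (n - 1) ^ (2 * j) * fact n ^ (2 * (n - j))))"
      using moment[OF that] by simp
    finally show ?thesis .
  qed
  have "int (F k n) = b k" by (simp add: F_def b_def)
  also have "\<dots> = (\<Sum>i=0..n-k. (-1)^i * int (k + i choose k) * (\<Sum>s=0..n. int (s choose (k + i)) * b s))"
    using inversion[OF assms, of b] by simp
  also have "\<dots> = (\<Sum>i=0..n-k. int ((n choose k)^2 * fact k * (fact (n - 1))^(2*k)) *
      ((-1)^i * int ((n - k choose i)^2 * (fact (n - 1))^(2*i) * fact i * (fact n)^(2*n - 2*k - 2*i))))"
  proof (intro sum.cong refl)
    fix i assume "i \<in> {0..n-k}"
    then have ki: "k + i \<le> n" using assms by simp
    have "(-1)^i * int (k + i choose k) * (\<Sum>s=0..n. int (s choose (k + i)) * b s)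
        = (-1)^i * int ((k + i choose k) * ((n choose (k + i))^2 * fact (k + i) * (fact (n - 1) ^ (2 * (k + i)) * fact n ^ (2 * (n - (k + i))))))"
      using mom[OF ki] by simp
    also have "\<dots> = (-1)^i * int (((n choose k)^2 * fact k * fact (n - 1)^(2*k)) * ((n - k choose i)^2 * fact (n - 1)^(2*i) * fact i * fact n^(2*n - 2*k - 2*i)))"
      using term_identity[OF ki, of "fact (n - 1)" "fact n"] by (simp only:)
    finally show "(-1)^i * int (k + i choose k) * (\<Sum>s=0..n. int (s choose (k + i)) * b s) =
       int ((n choose k)^2 * fact k * (fact (n - 1))^(2*k)) *
      ((-1)^i * int ((n - k choose i)^2 * (fact (n - 1))^(2*i) * fact i * (fact n)^(2*n - 2*k - 2*i)))"
      by (simp only: of_nat_mult ac_simps)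
  qed
  also have "\<dots> = int ((n choose k)^2 * fact k * (fact (n - 1))^(2*k)) *
    (\<Sum>i = 0..n - k. (-1)^i * int ((n - k choose i)^2 * (fact (n - 1))^(2*i) * fact i
        * (fact n)^(2*n - 2*k - 2*i)))" by (rule sum_distrib_left[symmetric])
  finally show ?thesis .
qed

end
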